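(* For every real $p\geq 0$ and every integer $n\geq 2$, $$\sum_{k=1}^{n-1}\frac{B_{2k}B_{2n-2k}}{(2k)(2n-2k)}\,\frac{\Gamma(2k+p)\Gamma(2n-2k+p)}{\Gamma(2k)\Gamma(2n-2k)}=2\Gamma(p+1)\sum_{k=1}^{n}\frac{B_{2k}B_{2n-2k}}{(2k)!\,(2n-2k)!}\,\frac{\Gamma(2k+p)\Gamma(2n+2p)}{\Gamma(2p+2k+1)}+2\,\frac{B_{2n}\Gamma(2n+2p)}{(2n)!}\sum_{k=1}^{2n-1}\beta(p+k,p+1).$$
   Context: $B_n$ denotes the Bernoulli numbers, defined by $\frac{x}{e^x-1}=\sum_{n\ge 0}B_n\frac{x^n}{n!}$ (so $B_0=1$). $\Gamma$ is the Gamma function and $\beta(a,b)=\frac{\Gamma(a)\Gamma(b)}{\Gamma(a+b)}$ is the Euler beta function. *)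

theory Defs
  imports "HOL-Analysis.Analysis" "HOL-Computational_Algebra.Formal_Power_Series"
begin

definition bernoulli_num :: "nat \<Rightarrow> real" where
  "bernoulli_num n = fact n * fps_nth (fps_X / (fps_exp 1 - 1)) n"

end

theory Submission
  imports Defs
begin


definition Bf :: "real fps" where "Bf = fps_X / (fps_exp 1 - 1)"
definition EE :: "real fps" where "EE = Bf + fps_const (1/2) * fps_X"

lemma expm1_ne: "c \<noteq> 0 \<Longrightarrow> fps_exp (c::real) - 1 \<noteq> 0"
  by simp

lemma subdeg_expm1: "subdegree (fps_exp (1::real) - 1) = 1"
  by (rule subdegreeI) (auto simp: less_Suc_eq_0_disj)

lemma Bf_mult: "Bf * (fps_exp 1 - 1) = fps_X"
  unfolding Bf_def using subdeg_expm1 by (intro fps_times_divide_eq) auto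

lemma EE_mult: "EE * (fps_exp 1 - 1) = fps_const (1/2) * fps_X * (fps_exp 1 + 1)"
proof -
  have "EE * (fps_exp 1 - 1) = Bf * (fps_exp 1 - 1) + fps_const (1/2) * fps_X * (fps_exp 1 - 1)"
    unfolding EE_def by (simp add: algebra_simps)
  also have "\<dots> = fps_const (1/2) * fps_X * (fps_exp 1 + 1)"
    unfolding Bf_mult
  proof -
    have c2: "(2::real fps) = fps_const 2" by (rule fps_numeral_fps_const)
    have c1: "fps_const (1/2) * fps_const 2 = (1::real fps)" by simp
    have x2: "(fps_X::real fps) = fps_const (1/2) * fps_X + fps_const (1/2) * fps_X"
    proof -
      have "fps_const (1/2) * fps_X + fps_const (1/2) * fps_X = fps_const (1/2) * fps_const 2 * (fps_X::real fps)"
        by (simp only: c2[symmetric] distrib_right[symmetric] mult_2_right one_add_one mult.assoc)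
      thus ?thesis using c1 by simp
    qed
    have gen: "\<And>x h u :: real fps. x = h + h \<Longrightarrow> x + h * (u - 1) = h * (u + 1)"
      by (simp add: algebra_simps)
    show "(fps_X::real fps) + fps_const (1/2) * fps_X * (fps_exp 1 - 1) = fps_const (1/2) * fps_X * (fps_exp 1 + 1)"
      by (rule gen[OF x2])
  qed
  finally show ?thesis .
qed

definition sc :: "real \<Rightarrow> real fps \<Rightarrow> real fps" where "sc c f = f oo (fps_const c * fps_X)"

lemma sc_nth[simp]: "fps_nth (sc c f) n = c^n * fps_nth f n" by (simp add: sc_def)

lemma EE_sc: "sc c EE * (fps_exp c - 1) = fps_const c * fps_const (1/2) * fps_X * (fps_exp c + 1)"
proof -
  have z: "fps_nth (fps_const c * fps_X) 0 = 0" by simp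
  have "(EE * (fps_exp 1 - 1)) oo (fps_const c * fps_X) = (fps_const (1/2) * fps_X * (fps_exp 1 + 1)) oo (fps_const c * fps_X)"
    by (simp only: EE_mult)
  thus ?thesis
    unfolding sc_def fps_compose_mult_distrib[OF z] fps_compose_sub_distrib fps_compose_add_distrib
    apply (simp only: fps_X_fps_compose_startby0[OF z] fps_exp_compose_linear fps_const_compose fps_compose_1)
    apply (simp add: mult_ac)
    done
qed


lemma uv: "fps_exp (1::real) * fps_exp (-1) = 1"
  using fps_exp_add_mult[of "1::real" "-1"] by simp
lemma ring1: "(u::'a::comm_ring_1) * v = 1 \<Longrightarrow> E * (u - 1) = (E * (v - 1)) * (- u)"
  by (simp add: algebra_simps)
lemma ring2: "- ((H::'a::comm_ring_1) * X * (v + 1)) * (- u) = H * X * (u * v + u)"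
  by (simp add: algebra_simps)
lemma ring3: "(H::'a::comm_ring_1) * X * (1 + u) = H * X * (u + 1)"
  by (simp add: algebra_simps)

lemma EE_even: "sc (-1) EE = EE"
proof -
  define u where "u = fps_exp (1::real)"
  define v where "v = fps_exp (-1::real)"
  define H where "H = fps_const (1/2::real)"
  have uv': "u * v = 1" unfolding u_def v_def by (rule uv)
  have h1: "sc (-1) EE * (v - 1) = - (H * fps_X * (v + 1))"
  proof -
    have "fps_const (-1) * fps_const (1/2) = - H" unfolding H_def by simp
    thus ?thesis using EE_sc[of "-1"] unfolding v_def by (metis mult_minus_left)
  qed
  have h2: "EE * (u - 1) = H * fps_X * (u + 1)" using EE_mult unfolding u_def H_def .
  have "sc (-1) EE * (u - 1) = (sc (-1) EE * (v - 1)) * (- u)"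
    using uv' by (rule ring1)
  also have "\<dots> = H * fps_X * (u * v + u)" unfolding h1 by (rule ring2)
  also have "\<dots> = EE * (u - 1)" unfolding h2 uv' by (rule ring3)
  finally have "sc (-1) EE * (u - 1) = EE * (u - 1)" .
  moreover have "u - 1 \<noteq> 0" unfolding u_def by simp
  ultimately show ?thesis by simp
qed

lemma EE_odd: "odd m \<Longrightarrow> fps_nth EE m = 0"
proof -
  assume "odd m"
  have "fps_nth (sc (-1) EE) m = fps_nth EE m" by (simp only: EE_even)
  hence "(-1)^m * fps_nth EE m = fps_nth EE m" by (simp only: sc_nth)
  with \<open>odd m\<close> show ?thesis by simp
qed

lemma Bf0: "fps_nth Bf 0 = 1"
proof -
  have "fps_nth (Bf * (fps_exp 1 - 1)) 1 = 1" unfolding Bf_mult by simp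
  thus ?thesis by (simp add: fps_mult_nth_1)
qed

lemma bern_Bf: "bernoulli_num m = fact m * fps_nth Bf m"
  unfolding bernoulli_num_def Bf_def ..

lemma EE_nth: "m \<noteq> 1 \<Longrightarrow> fps_nth EE m = bernoulli_num m / fact m"
  unfolding EE_def bern_Bf by simp

lemma bern0: "bernoulli_num 0 = 1"
  using Bf0 unfolding bern_Bf by simp


lemma ring_main:
  fixes Et Es E u w T S H X :: "'a::comm_ring_1"
  assumes ht: "Et * (u - 1) = T * H * X * (u + 1)"
      and hs: "Es * (w - 1) = S * H * X * (w + 1)"
      and he: "E * (u * w - 1) = H * X * (u * w + 1)"
  shows "(Et * Es) * ((u - 1) * (w - 1) * (u * w - 1)) =
         (S * (Et * E) + T * (Es * E) - T * S * H * H * X^2) * ((u - 1) * (w - 1) * (u * w - 1))"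
proof -
  have l: "(Et * Es) * ((u - 1) * (w - 1) * (u * w - 1)) = (Et * (u - 1)) * (Es * (w - 1)) * (u * w - 1)"
    by (simp add: algebra_simps)
  have r: "(S * (Et * E) + T * (Es * E) - T * S * H * H * X^2) * ((u - 1) * (w - 1) * (u * w - 1))
     = S * (Et * (u - 1)) * (E * (u * w - 1)) * (w - 1) + T * (Es * (w - 1)) * (E * (u * w - 1)) * (u - 1)
       - T * S * H * H * X^2 * ((u - 1) * (w - 1) * (u * w - 1))"
    by (simp add: algebra_simps)
  show ?thesis unfolding l r ht hs he
    by (simp add: algebra_simps power2_eq_square)
qed


lemma fps_main:
  fixes t s :: real
  assumes ts: "t + s = 1" and t0: "t \<noteq> 0" and s0: "s \<noteq> 0"
  shows "sc t EE * sc s EE = fps_const s * (sc t EE * EE) + fps_const t * (sc s EE * EE)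
           - fps_const t * fps_const s * fps_const (1/2) * fps_const (1/2) * fps_X^2"
proof -
  define u where "u = fps_exp t"
  define w where "w = fps_exp s"
  have uw: "u * w = fps_exp 1" unfolding u_def w_def using ts by (simp flip: fps_exp_add_mult)
  have ht: "sc t EE * (u - 1) = fps_const t * fps_const (1/2) * fps_X * (u + 1)"
    unfolding u_def by (rule EE_sc)
  have hs: "sc s EE * (w - 1) = fps_const s * fps_const (1/2) * fps_X * (w + 1)"
    unfolding w_def by (rule EE_sc)
  have he: "EE * (u * w - 1) = fps_const (1/2) * fps_X * (u * w + 1)"
    unfolding uw by (rule EE_mult)
  have D: "(u - 1) * (w - 1) * (u * w - 1) \<noteq> 0"
    unfolding uw unfolding u_def w_def using t0 s0 by simp
  show ?thesis
    using ring_main[OF ht hs he] D by (rule mult_right_cancel[THEN iffD1, rotated])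
qed


lemma sum_even:
  fixes n :: nat
  assumes "\<And>i. odd i \<Longrightarrow> g i = (0::real)"
  shows "(\<Sum>i=0..2*n. g i) = (\<Sum>k=0..n. g (2*k))"
proof (induction n)
  case 0 then show ?case by simp
next
  case (Suc n)
  have "(\<Sum>i=0..2*Suc n. g i) = (\<Sum>i=0..2*n. g i) + g (2*n+1) + g (2*n+2)"
    by (simp add: algebra_simps)
  also have "g (2*n+1) = 0" by (rule assms) simp
  finally show ?case using Suc by simp
qed

definition ee :: "nat \<Rightarrow> real" where "ee m = fps_nth EE m"

lemma ee_odd: "odd m \<Longrightarrow> ee m = 0" unfolding ee_def by (rule EE_odd)

lemma poly_id:
  fixes t s :: real
  assumes ts: "t + s = 1" and t0: "t \<noteq> 0" and s0: "s \<noteq> 0" and n2: "n \<ge> 2"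
  shows "(\<Sum>k=0..n. t^(2*k) * s^(2*n-2*k) * (ee (2*k) * ee (2*n-2*k)))
     = s * (\<Sum>k=0..n. t^(2*k) * (ee (2*k) * ee (2*n-2*k)))
     + t * (\<Sum>k=0..n. s^(2*k) * (ee (2*k) * ee (2*n-2*k)))"
proof -
  have e1: "fps_nth (sc t EE * sc s EE) (2*n) = fps_nth (fps_const s * (sc t EE * EE) + fps_const t * (sc s EE * EE)
           - fps_const t * fps_const s * fps_const (1/2) * fps_const (1/2) * fps_X^2) (2*n)"
    by (simp only: fps_main[OF ts t0 s0])
  have e2: "fps_nth (fps_const t * fps_const s * fps_const (1/2) * fps_const (1/2) * fps_X^2) (2*n) = 0"
    using n2 by (simp add: fps_X_power_iff)
  have eq: "fps_nth (sc t EE * sc s EE) (2*n) = s * fps_nth (sc t EE * EE) (2*n) + t * fps_nth (sc s EE * EE) (2*n)"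
    using e1 e2 by simp
  have L: "fps_nth (sc t EE * sc s EE) (2*n) = (\<Sum>k=0..n. t^(2*k) * s^(2*n-2*k) * (ee (2*k) * ee (2*n-2*k)))"
    unfolding fps_mult_nth sc_nth
    by (subst sum_even) (auto simp: ee_def[symmetric] ee_odd intro!: sum.cong)
  have R1: "fps_nth (sc t EE * EE) (2*n) = (\<Sum>k=0..n. t^(2*k) * (ee (2*k) * ee (2*n-2*k)))"
    unfolding fps_mult_nth sc_nth
    by (subst sum_even) (auto simp: ee_def[symmetric] ee_odd intro!: sum.cong)
  have R2: "fps_nth (sc s EE * EE) (2*n) = (\<Sum>k=0..n. s^(2*k) * (ee (2*k) * ee (2*n-2*k)))"
    unfolding fps_mult_nth sc_nth
    by (subst sum_even) (auto simp: ee_def[symmetric] ee_odd intro!: sum.cong)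
  show ?thesis using eq unfolding L R1 R2 .
qed


lemma geo: "(1 - t) * (\<Sum>j=1..m. t^j) = t - (t::real)^(m+1)"
proof (induction m)
  case 0 then show ?case by simp
next
  case (Suc m)
  have "(1 - t) * (\<Sum>j=1..Suc m. t^j) = (1 - t) * (\<Sum>j=1..m. t^j) + (1 - t) * t^(Suc m)"
    by (simp add: distrib_left)
  also have "\<dots> = t - t^(Suc m + 1)" unfolding Suc.IH by (simp add: algebra_simps)
  finally show ?case .
qed

lemma poly_id2:
  fixes t s :: real
  assumes ts: "t + s = 1" and t0: "t \<noteq> 0" and s0: "s \<noteq> 0" and n2: "n \<ge> 2"
  defines "bb \<equiv> \<lambda>k. ee (2*k) * ee (2*n-2*k)"
  shows "(\<Sum>k=1..n-1. bb k * (t^(2*k) * s^(2*n-2*k)))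
     = (\<Sum>k=1..n. bb k * (t^(2*k) * s + s^(2*k) * t))
       + bb 0 * (\<Sum>j=1..2*n-1. t^j * s + s^j * t)"
proof -
  obtain m where m: "n = Suc m" using n2 by (cases n) auto
  have P: "(\<Sum>k=0..n. t^(2*k) * s^(2*n-2*k) * bb k)
     = s * (\<Sum>k=0..n. t^(2*k) * bb k) + t * (\<Sum>k=0..n. s^(2*k) * bb k)"
    using poly_id[OF ts t0 s0 n2] unfolding bb_def .
  have bbn: "bb n = bb 0" unfolding bb_def by simp
  have split: "\<And>g. (\<Sum>k=0..n. g k) = g 0 + (\<Sum>k=1..n-1. g k) + g n"
    unfolding m by (simp add: sum.atLeast_Suc_atMost sum.cl_ivl_Suc)
  have split2: "\<And>g. (\<Sum>k=0..n. g k) = g 0 + (\<Sum>k=1..n. g k)"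
    by (simp add: sum.atLeast_Suc_atMost)
  have g1: "s * (\<Sum>j=1..2*n-1. t^j) = t - t^(2*n)"
  proof -
    have "s = 1 - t" using ts by simp
    moreover have "2*n-1+1 = 2*n" using n2 by simp
    ultimately show ?thesis using geo[of t "2*n-1"] by simp
  qed
  have g2: "t * (\<Sum>j=1..2*n-1. s^j) = s - s^(2*n)"
  proof -
    have "t = 1 - s" using ts by simp
    moreover have "2*n-1+1 = 2*n" using n2 by simp
    ultimately show ?thesis using geo[of s "2*n-1"] by simp
  qed
  have G: "(\<Sum>j=1..2*n-1. t^j * s + s^j * t) = s * (\<Sum>j=1..2*n-1. t^j) + t * (\<Sum>j=1..2*n-1. s^j)"
    by (simp add: sum.distrib sum_distrib_left algebra_simps)
  have "(\<Sum>k=1..n-1. bb k * (t^(2*k) * s^(2*n-2*k))) = (\<Sum>k=1..n-1. t^(2*k) * s^(2*n-2*k) * bb k)"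
    by (simp add: mult_ac)
  also have "\<dots> = (\<Sum>k=0..n. t^(2*k) * s^(2*n-2*k) * bb k) - bb 0 * s^(2*n) - bb 0 * t^(2*n)"
    unfolding split by (simp add: bbn)
  also have "\<dots> = s * (\<Sum>k=0..n. t^(2*k) * bb k) + t * (\<Sum>k=0..n. s^(2*k) * bb k) - bb 0 * s^(2*n) - bb 0 * t^(2*n)"
    unfolding P ..
  also have "\<dots> = s * (\<Sum>k=1..n. t^(2*k) * bb k) + t * (\<Sum>k=1..n. s^(2*k) * bb k) + bb 0 * (s + t - s^(2*n) - t^(2*n))"
    unfolding split2 by (simp add: algebra_simps)
  also have "\<dots> = (\<Sum>k=1..n. bb k * (t^(2*k) * s + s^(2*k) * t)) + bb 0 * (\<Sum>j=1..2*n-1. t^j * s + s^j * t)"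
    unfolding G g1 g2 by (simp add: sum.distrib sum_distrib_left algebra_simps)
  finally show ?thesis .
qed


definition FF :: "real \<Rightarrow> nat \<Rightarrow> nat \<Rightarrow> real \<Rightarrow> real" where
  "FF p a b t = t powr (p + real a - 1) * (1 - t) powr (p + real b - 1)"

lemma FF_int: "p \<ge> 0 \<Longrightarrow> a \<ge> 1 \<Longrightarrow> b \<ge> 1 \<Longrightarrow>
   (FF p a b has_integral Beta (p + real a) (p + real b)) {0..1}"
  unfolding FF_def by (rule has_integral_Beta_real) auto

lemma FF_eq: "0 < t \<Longrightarrow> t < 1 \<Longrightarrow>
   FF p a b t = (t powr (p - 1) * (1 - t) powr (p - 1)) * (t^a * (1-t)^b)"
proof -
  assume t: "0 < t" "t < 1"
  have "t powr (p + real a - 1) = t powr (p - 1) * t^a"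
    using t by (simp add: powr_add[symmetric] powr_realpow[symmetric] algebra_simps)
  moreover have "(1 - t) powr (p + real b - 1) = (1 - t) powr (p - 1) * (1 - t)^b"
    using t by (simp add: powr_add[symmetric] powr_realpow[symmetric] algebra_simps)
  ultimately show ?thesis unfolding FF_def by (simp add: mult_ac)
qed

lemma beta_id:
  fixes p :: real
  assumes p: "p \<ge> 0" and n2: "n \<ge> 2"
  defines "bb \<equiv> \<lambda>k. ee (2*k) * ee (2*n-2*k)"
  shows "(\<Sum>k=1..n-1. bb k * Beta (p + real (2*k)) (p + real (2*n-2*k)))
     = (\<Sum>k=1..n. bb k * (Beta (p + real (2*k)) (p + 1) + Beta (p + 1) (p + real (2*k))))
       + bb 0 * (\<Sum>j=1..2*n-1. Beta (p + real j) (p + 1) + Beta (p + 1) (p + real j))"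
proof -
  define L where "L = (\<lambda>t. \<Sum>k=1..n-1. bb k * FF p (2*k) (2*n-2*k) t)"
  define R where "R = (\<lambda>t. (\<Sum>k=1..n. bb k * (FF p (2*k) 1 t + FF p 1 (2*k) t))
       + bb 0 * (\<Sum>j=1..2*n-1. FF p j 1 t + FF p 1 j t))"
  have IL: "(L has_integral (\<Sum>k=1..n-1. bb k * Beta (p + real (2*k)) (p + real (2*n-2*k)))) {0..1}"
    unfolding L_def
    by (intro has_integral_sum has_integral_mult_right FF_int) (use p in auto)
  have IR: "(R has_integral ((\<Sum>k=1..n. bb k * (Beta (p + real (2*k)) (p + 1) + Beta (p + 1) (p + real (2*k))))
       + bb 0 * (\<Sum>j=1..2*n-1. Beta (p + real j) (p + 1) + Beta (p + 1) (p + real j)))) {0..1}"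
  proof -
    have A1: "(FF p (2*k) (Suc 0) has_integral Beta (p + 2 * real k) (p + 1)) {0..1}" if "k \<ge> 1" for k
      using FF_int[OF p, of "2*k" 1] that by simp
    have A2: "(FF p (Suc 0) (2*k) has_integral Beta (p + 1) (p + 2 * real k)) {0..1}" if "k \<ge> 1" for k
      using FF_int[OF p, of 1 "2*k"] that by simp
    show ?thesis
      unfolding R_def
      using FF_int[OF p, of _ 1] FF_int[OF p, of 1]
      by (intro has_integral_add has_integral_sum has_integral_mult_right) (auto intro: A1 A2)
  qed
  have LR: "R t = L t" if "t \<in> {0..1} - {0,1}" for t
  proof -
    from that have t: "0 < t" "t < 1" by auto
    define W where "W = t powr (p - 1) * (1 - t) powr (p - 1)"
    have ts: "t + (1 - t) = 1" by simp
    have P: "(\<Sum>k=1..n-1. bb k * (t^(2*k) * (1-t)^(2*n-2*k)))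
     = (\<Sum>k=1..n. bb k * (t^(2*k) * (1-t) + (1-t)^(2*k) * t))
       + bb 0 * (\<Sum>j=1..2*n-1. t^j * (1-t) + (1-t)^j * t)"
      using poly_id2[OF ts _ _ n2] t unfolding bb_def by simp
    have "L t = W * (\<Sum>k=1..n-1. bb k * (t^(2*k) * (1-t)^(2*n-2*k)))"
      unfolding L_def W_def FF_eq[OF t] by (simp add: sum_distrib_left mult_ac)
    also have "\<dots> = W * ((\<Sum>k=1..n. bb k * (t^(2*k) * (1-t) + (1-t)^(2*k) * t))
       + bb 0 * (\<Sum>j=1..2*n-1. t^j * (1-t) + (1-t)^j * t))" unfolding P ..
    also have "\<dots> = R t"
      unfolding R_def W_def FF_eq[OF t] by (simp add: sum_distrib_left distrib_left mult_ac)
    finally show ?thesis by simp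
  qed
  have "(L has_integral ((\<Sum>k=1..n. bb k * (Beta (p + real (2*k)) (p + 1) + Beta (p + 1) (p + real (2*k))))
       + bb 0 * (\<Sum>j=1..2*n-1. Beta (p + real j) (p + 1) + Beta (p + 1) (p + real j)))) {0..1}"
    using IR has_integral_spike_finite_eq[of "{0,1}" "{0..1}" L R] LR by auto
  from has_integral_unique[OF IL this] show ?thesis .
qed


lemma pos_not_npi: "(x::real) > 0 \<Longrightarrow> x \<notin> \<int>\<^sub>\<le>\<^sub>0"
  by (auto elim!: nonpos_Ints_cases)

lemma nGamma: "m \<ge> 1 \<Longrightarrow> real m * Gamma (real m) = fact m"
proof -
  assume m: "m \<ge> 1"
  have "Gamma (real m + 1) = real m * Gamma (real m)"
    by (rule Gamma_plus1) (rule pos_not_npi, use m in simp)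
  moreover have "Gamma (1 + real m) = fact m" by (rule Gamma_fact)
  ultimately show ?thesis by (simp add: add.commute)
qed

lemma GGB: "x > 0 \<Longrightarrow> y > 0 \<Longrightarrow> Gamma x * Gamma (y::real) = Beta x y * Gamma (x + y)"
  by (rule Gamma_Gamma_Beta) (rule pos_not_npi, simp)

lemma term1:
  fixes p X :: real
  assumes p: "p \<ge> 0" and a: "a \<ge> 1" and b: "b \<ge> 1"
  shows "X / (real a * real b) * (Gamma (real a + p) * Gamma (real b + p) / (Gamma (real a) * Gamma (real b)))
       = Gamma (real a + real b + 2*p) * (X / (fact a * fact b) * Beta (p + real a) (p + real b))"
proof -
  have ga: "Gamma (real a) > 0" "Gamma (real b) > 0" using a b by auto
  have prod: "(real a * real b) * (Gamma (real a) * Gamma (real b)) = fact a * fact b"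
    using nGamma[OF a] nGamma[OF b] by (simp add: mult_ac)
  hence e1: "X / (real a * real b) * (Gamma (real a + p) * Gamma (real b + p) / (Gamma (real a) * Gamma (real b)))
       = X / (fact a * fact b) * (Gamma (real a + p) * Gamma (real b + p))"
    by (metis divide_divide_eq_left times_divide_eq_left times_divide_eq_right mult.commute)
  have e2: "Gamma (real a + p) * Gamma (real b + p) = Beta (p + real a) (p + real b) * Gamma (real a + real b + 2*p)"
    using GGB[of "real a + p" "real b + p"] a b p by (simp add: add.commute add.left_commute)
  show ?thesis unfolding e1 e2 using prod by (simp add: mult_ac)
qed

lemma term2:
  fixes p X G :: real
  assumes p: "p \<ge> 0" and a: "a \<ge> 1"
  shows "Gamma (p + 1) * (X * (Gamma (real a + p) * G / Gamma (2*p + real a + 1)))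
       = G * (X * Beta (p + real a) (p + 1))"
proof -
  have g: "Gamma (2*p + real a + 1) > 0" using a p by simp
  have "Gamma (real a + p) * Gamma (p + 1) = Beta (real a + p) (p + 1) * Gamma (2*p + real a + 1)"
    using GGB[of "real a + p" "p + 1"] a p by (simp add: algebra_simps)
  then show ?thesis using g by (simp add: field_simps add.commute)
qed


theorem theorem4p1:
  fixes p :: real and n :: nat
  assumes "p \<ge> 0" and "n \<ge> 2"
  shows "(\<Sum>k=1..n-1. bernoulli_num (2*k) * bernoulli_num (2*n-2*k)
            / (real (2*k) * real (2*n-2*k))
            * (Gamma (real (2*k) + p) * Gamma (real (2*n-2*k) + p)
               / (Gamma (real (2*k)) * Gamma (real (2*n-2*k)))))
       = 2 * Gamma (p + 1) * (\<Sum>k=1..n. bernoulli_num (2*k) * bernoulli_num (2*n-2*k)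
            / (fact (2*k) * fact (2*n-2*k))
            * (Gamma (real (2*k) + p) * Gamma (real (2*n) + 2*p)
               / Gamma (2*p + real (2*k) + 1)))
         + 2 * (bernoulli_num (2*n) * Gamma (real (2*n) + 2*p) / fact (2*n))
             * (\<Sum>k=1..2*n-1. Beta (p + real k) (p + 1))"
proof -
  note p = assms(1) and n2 = assms(2)
  define G where "G = Gamma (real (2*n) + 2*p)"
  define bb where "bb = (\<lambda>k. ee (2*k) * ee (2*n-2*k))"
  have bbv: "bernoulli_num (2*k) * bernoulli_num (2*n-2*k) / (fact (2*k) * fact (2*n-2*k)) = bb k" for k
  proof -
    have "2*k \<noteq> 1" "2*n-2*k \<noteq> 1" by presburger+
    thus ?thesis unfolding bb_def ee_def by (simp add: EE_nth)
  qed
  have bb0: "bb 0 = bernoulli_num (2*n) / fact (2*n)"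
    using bbv[of 0] by (simp add: bern0)
  have S1: "(\<Sum>k=1..n-1. bernoulli_num (2*k) * bernoulli_num (2*n-2*k)
            / (real (2*k) * real (2*n-2*k))
            * (Gamma (real (2*k) + p) * Gamma (real (2*n-2*k) + p)
               / (Gamma (real (2*k)) * Gamma (real (2*n-2*k)))))
        = G * (\<Sum>k=1..n-1. bb k * Beta (p + real (2*k)) (p + real (2*n-2*k)))"
    unfolding sum_distrib_left
  proof (rule sum.cong[OF refl])
    fix k assume k: "k \<in> {1..n-1}"
    have r: "real (2*k) + real (2*n-2*k) = real (2*n)" 
    proof -
      have "2*k \<le> 2*n" using k by auto
      hence "2*k + (2*n-2*k) = 2*n" by simp
      thus ?thesis by (metis of_nat_add)
    qed
    show "bernoulli_num (2*k) * bernoulli_num (2*n-2*k)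
            / (real (2*k) * real (2*n-2*k))
            * (Gamma (real (2*k) + p) * Gamma (real (2*n-2*k) + p)
               / (Gamma (real (2*k)) * Gamma (real (2*n-2*k))))
          = G * (bb k * Beta (p + real (2*k)) (p + real (2*n-2*k)))"
    proof -
      have a1: "1 \<le> 2*k" "1 \<le> 2*n-2*k" using k by auto
      from term1[OF p a1, of "bernoulli_num (2*k) * bernoulli_num (2*n-2*k)"]
      show ?thesis by (simp only: r bbv G_def[symmetric])
    qed
  qed
  have S2: "Gamma (p + 1) * (\<Sum>k=1..n. bernoulli_num (2*k) * bernoulli_num (2*n-2*k)
            / (fact (2*k) * fact (2*n-2*k))
            * (Gamma (real (2*k) + p) * Gamma (real (2*n) + 2*p)
               / Gamma (2*p + real (2*k) + 1)))
        = G * (\<Sum>k=1..n. bb k * Beta (p + real (2*k)) (p + 1))"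
    unfolding sum_distrib_left
  proof (rule sum.cong[OF refl])
    fix k assume k: "k \<in> {1..n}"
    show "Gamma (p + 1) * (bernoulli_num (2*k) * bernoulli_num (2*n-2*k)
            / (fact (2*k) * fact (2*n-2*k))
            * (Gamma (real (2*k) + p) * Gamma (real (2*n) + 2*p)
               / Gamma (2*p + real (2*k) + 1)))
        = G * (bb k * Beta (p + real (2*k)) (p + 1))"
    proof -
      have a1: "1 \<le> 2*k" using k by auto
      from term2[OF p a1, of "bernoulli_num (2*k) * bernoulli_num (2*n-2*k)
            / (fact (2*k) * fact (2*n-2*k))" G]
      show ?thesis by (simp only: bbv G_def[symmetric])
    qed
  qed
  have BI: "(\<Sum>k=1..n-1. bb k * Beta (p + real (2*k)) (p + real (2*n-2*k)))
     = 2 * (\<Sum>k=1..n. bb k * Beta (p + real (2*k)) (p + 1))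
       + 2 * bb 0 * (\<Sum>j=1..2*n-1. Beta (p + real j) (p + 1))"
  proof -
    have BI0: "(\<Sum>k=1..n-1. bb k * Beta (p + real (2*k)) (p + real (2*n-2*k)))
     = (\<Sum>k=1..n. bb k * (Beta (p + real (2*k)) (p + 1) + Beta (p + 1) (p + real (2*k))))
       + bb 0 * (\<Sum>j=1..2*n-1. Beta (p + real j) (p + 1) + Beta (p + 1) (p + real j))"
      unfolding bb_def by (rule beta_id[OF p n2])
    show ?thesis unfolding BI0 Beta_commute[of "p + 1"]
      by (simp add: sum_distrib_left mult_ac)
  qed
  show ?thesis
    unfolding S1 mult.assoc[of 2 "Gamma (p+1)"] S2 BI bb0
    by (simp add: G_def algebra_simps)
qed

end
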